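(* Let $h,g:\mathbb{Z}^2\to\mathbb{C}$ and $\alpha\in\mathbb{C}$. For $f=f(n,m)$ write $\widetilde f=f(n+1,m)$, $\widehat f=f(n,m+1)$, $\widetilde{\widetilde f}=f(n+2,m)$, etc. Consider, for a spectral parameter $p\in\mathbb{C}$, the linear system for $\varphi:\mathbb{Z}^2\to\mathbb{C}$ $$\widetilde{\widetilde{\varphi}}+h\,\widetilde{\varphi}+\alpha^2\varphi=p^2\varphi,\qquad \widehat{\varphi}=\widetilde{\varphi}-g\,\varphi .$$ Suppose this system is compatible for all $p$, i.e. the two values of $\varphi(n+2,m+1)$ obtained by computing $\widehat{\widetilde{\widetilde{\varphi}}}$ and $\widetilde{\widetilde{\widehat{\varphi}}}$ via the system coincide identically in the free data $\varphi(n,m),\varphi(n+1,m)$. Then $$\widehat{h}-\widetilde{h}=\widetilde{\widetilde{g}}-g,$$ and $(h+\widetilde g)\,g$ is invariant under the shift $n\mapsto n+1$, so that after one summation in the $n$-direction $(h+\widetilde{g})\,g=\beta^2-\alpha^2$, where $\beta^2-\alpha^2$ is the constant of integration. Moreover, if $(h+\widetilde g)g=\beta^2-\alpha^2$ with $\beta$ a constant, then every solution $\varphi$ of the system satisfies $$\widehat{\widehat{\varphi}}+\eta\,\widehat{\varphi}+\beta^2\varphi=p^2\varphi,\qquad \eta=h+\widetilde{g}+\widehat{g}.$$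
   Context: Shift notation: for a function $f$ on $\mathbb{Z}^2$, $\widetilde f(n,m)=f(n+1,m)$ and $\widehat f(n,m)=f(n,m+1)$; combined accents denote composed shifts. *)

theory Defs
  imports Complex_Main
begin

text \<open>Functions on Z^2 are modelled as int \<Rightarrow> int \<Rightarrow> complex, f n m = f(n,m).
  Tilde shift: n \<mapsto> n+1; hat shift: m \<mapsto> m+1.\<close>

text \<open>Value of phi(n+2,m) given x = phi(n,m), y = phi(n+1,m), from the first equation
  phi~~ + h phi~ + alpha^2 phi = p^2 phi.\<close>
definition step_nn :: "(int \<Rightarrow> int \<Rightarrow> complex) \<Rightarrow> complex \<Rightarrow> complex \<Rightarrow> int \<Rightarrow> int \<Rightarrow> complex \<Rightarrow> complex \<Rightarrow> complex" where
  "step_nn h \<alpha> p n m x y = (p\<^sup>2 - \<alpha>\<^sup>2) * x - h n m * y"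

text \<open>Value of phi(n,m+1) given x = phi(n,m), y = phi(n+1,m), from phi^ = phi~ - g phi.\<close>
definition step_hat :: "(int \<Rightarrow> int \<Rightarrow> complex) \<Rightarrow> int \<Rightarrow> int \<Rightarrow> complex \<Rightarrow> complex \<Rightarrow> complex" where
  "step_hat g n m x y = y - g n m * x"

text \<open>phi(n+2,m+1) computed as the hat-shift of phi~~ (via the system), in terms of the free data.\<close>
definition hat_of_tt :: "(int \<Rightarrow> int \<Rightarrow> complex) \<Rightarrow> (int \<Rightarrow> int \<Rightarrow> complex) \<Rightarrow> complex \<Rightarrow> complex \<Rightarrow> int \<Rightarrow> int \<Rightarrow> complex \<Rightarrow> complex \<Rightarrow> complex" where
  "hat_of_tt h g \<alpha> p n m x y =
     step_nn h \<alpha> p n (m + 1) (step_hat g n m x y)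
        (step_hat g (n + 1) m y (step_nn h \<alpha> p n m x y))"

text \<open>phi(n+2,m+1) computed as the double tilde-shift of phi^ (via the system).\<close>
definition tt_of_hat :: "(int \<Rightarrow> int \<Rightarrow> complex) \<Rightarrow> (int \<Rightarrow> int \<Rightarrow> complex) \<Rightarrow> complex \<Rightarrow> complex \<Rightarrow> int \<Rightarrow> int \<Rightarrow> complex \<Rightarrow> complex \<Rightarrow> complex" where
  "tt_of_hat h g \<alpha> p n m x y =
     (let z = step_nn h \<alpha> p n m x y in
      step_hat g (n + 2) m z (step_nn h \<alpha> p (n + 1) m y z))"

definition compatible :: "(int \<Rightarrow> int \<Rightarrow> complex) \<Rightarrow> (int \<Rightarrow> int \<Rightarrow> complex) \<Rightarrow> complex \<Rightarrow> bool" where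
  "compatible h g \<alpha> \<longleftrightarrow>
     (\<forall>p n m x y. hat_of_tt h g \<alpha> p n m x y = tt_of_hat h g \<alpha> p n m x y)"

definition solves :: "(int \<Rightarrow> int \<Rightarrow> complex) \<Rightarrow> (int \<Rightarrow> int \<Rightarrow> complex) \<Rightarrow> complex \<Rightarrow> complex \<Rightarrow> (int \<Rightarrow> int \<Rightarrow> complex) \<Rightarrow> bool" where
  "solves h g \<alpha> p \<phi> \<longleftrightarrow>
     (\<forall>n m. \<phi> (n + 2) m + h n m * \<phi> (n + 1) m + \<alpha>\<^sup>2 * \<phi> n m = p\<^sup>2 * \<phi> n m
          \<and> \<phi> n (m + 1) = \<phi> (n + 1) m - g n m * \<phi> n m)"

end

theory Submission
  imports Defs
begin

lemma int_shift_invariant: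
  fixes F :: "int \<Rightarrow> complex"
  assumes "\<And>n. F (n + 1) = F n"
  shows "F n = F 0"
proof (induction n rule: int_induct[where k=0])
  case base then show ?case by simp
next
  case (step1 i) then show ?case using assms by simp
next
  case (step2 i) then show ?case using assms[of "i - 1"] by simp
qed

lemma aux:
  fixes a b c d e f :: complex
  assumes "a = c + d - e" "a * (b + f) = (c + d) * b"
  shows "(c + d) * f = (b + f) * e"
proof -
  have "(c + d - e) * (b + f) = (c + d) * b" using assms by simp
  then show ?thesis by algebra
qed

theorem proposition2p1:
  fixes h g :: "int \<Rightarrow> int \<Rightarrow> complex" and \<alpha> :: complex
  assumes "compatible h g \<alpha>"
  shows "(\<forall>n m. h n (m + 1) - h (n + 1) m = g (n + 2) m - g n m)
       \<and> (\<forall>n m. (h (n + 1) m + g (n + 2) m) * g (n + 1) m = (h n m + g (n + 1) m) * g n m)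
       \<and> (\<exists>\<beta> :: int \<Rightarrow> complex. \<forall>n m. (h n m + g (n + 1) m) * g n m = (\<beta> m)\<^sup>2 - \<alpha>\<^sup>2)
       \<and> (\<forall>(\<beta>::complex) p \<phi>.
            (\<forall>n m. (h n m + g (n + 1) m) * g n m = \<beta>\<^sup>2 - \<alpha>\<^sup>2) \<longrightarrow> solves h g \<alpha> p \<phi> \<longrightarrow>
            (\<forall>n m. \<phi> n (m + 2) + (h n m + g (n + 1) m + g n (m + 1)) * \<phi> n (m + 1)
                     + \<beta>\<^sup>2 * \<phi> n m = p\<^sup>2 * \<phi> n m))"
proof -
  have C: "\<And>p n m x y. hat_of_tt h g \<alpha> p n m x y = tt_of_hat h g \<alpha> p n m x y"
    using assms unfolding compatible_def by blast
  define q where "q = csqrt (\<alpha>\<^sup>2 + 1)"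
  have q2: "q\<^sup>2 - \<alpha>\<^sup>2 = 1" unfolding q_def by simp
  have A: "h n (m + 1) + g n m = h (n + 1) m + g (n + 2) m" for n m
  proof -
    have "hat_of_tt h g \<alpha> q n m 1 0 = tt_of_hat h g \<alpha> q n m 1 0" by (rule C)
    then show ?thesis
      unfolding hat_of_tt_def tt_of_hat_def step_nn_def step_hat_def Let_def q2
      by (simp add: algebra_simps)
  qed
  have B: "h n (m + 1) * (h n m + g (n + 1) m) = (h (n + 1) m + g (n + 2) m) * h n m" for n m
  proof -
    have "hat_of_tt h g \<alpha> \<alpha> n m 0 1 = tt_of_hat h g \<alpha> \<alpha> n m 0 1" by (rule C)
    then show ?thesis
      unfolding hat_of_tt_def tt_of_hat_def step_nn_def step_hat_def Let_def
      by (simp add: algebra_simps)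
  qed
  have P1: "\<forall>n m. h n (m + 1) - h (n + 1) m = g (n + 2) m - g n m"
  proof (intro allI)
    fix n m
    have "h n (m + 1) = h (n + 1) m + g (n + 2) m - g n m" using A[of n m] by (simp add: eq_diff_eq)
    then show "h n (m + 1) - h (n + 1) m = g (n + 2) m - g n m" by simp
  qed
  have P2: "(h (n + 1) m + g (n + 2) m) * g (n + 1) m = (h n m + g (n + 1) m) * g n m" for n m
  proof -
    have "h n (m + 1) = h (n + 1) m + g (n + 2) m - g n m" using A[of n m] by (simp add: eq_diff_eq)
    then show ?thesis using B[of n m] by (rule aux)
  qed
  have P3: "\<exists>\<beta> :: int \<Rightarrow> complex. \<forall>n m. (h n m + g (n + 1) m) * g n m = (\<beta> m)\<^sup>2 - \<alpha>\<^sup>2"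
  proof (intro exI allI)
    fix n m
    have "(h n m + g (n + 1) m) * g n m = (h 0 m + g (0 + 1) m) * g 0 m"
      using int_shift_invariant[of "\<lambda>n. (h n m + g (n + 1) m) * g n m" n] P2
      by (simp add: add.assoc)
    then show "(h n m + g (n + 1) m) * g n m
       = (csqrt ((h 0 m + g 1 m) * g 0 m + \<alpha>\<^sup>2))\<^sup>2 - \<alpha>\<^sup>2" by simp
  qed
  have P4: "\<forall>(\<beta>::complex) p \<phi>.
            (\<forall>n m. (h n m + g (n + 1) m) * g n m = \<beta>\<^sup>2 - \<alpha>\<^sup>2) \<longrightarrow> solves h g \<alpha> p \<phi> \<longrightarrow>
            (\<forall>n m. \<phi> n (m + 2) + (h n m + g (n + 1) m + g n (m + 1)) * \<phi> n (m + 1)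
                     + \<beta>\<^sup>2 * \<phi> n m = p\<^sup>2 * \<phi> n m)"
  proof (intro allI impI)
    fix \<beta> p :: complex and \<phi> n m
    assume F: "\<forall>n m. (h n m + g (n + 1) m) * g n m = \<beta>\<^sup>2 - \<alpha>\<^sup>2" and S: "solves h g \<alpha> p \<phi>"
    have e1: "\<phi> (n + 2) m = p\<^sup>2 * \<phi> n m - h n m * \<phi> (n + 1) m - \<alpha>\<^sup>2 * \<phi> n m"
    proof -
      have s1: "\<phi> (n + 2) m + h n m * \<phi> (n + 1) m + \<alpha>\<^sup>2 * \<phi> n m = p\<^sup>2 * \<phi> n m"
        using S unfolding solves_def by blast
      have "\<phi> (n + 2) m = (\<phi> (n + 2) m + h n m * \<phi> (n + 1) m + \<alpha>\<^sup>2 * \<phi> n m) - h n m * \<phi> (n + 1) m - \<alpha>\<^sup>2 * \<phi> n m"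
        by simp
      then show ?thesis unfolding s1 .
    qed
    have e2: "\<phi> n (m + 1) = \<phi> (n + 1) m - g n m * \<phi> n m" using S unfolding solves_def by blast
    have e3: "\<phi> (n + 1) (m + 1) = \<phi> (n + 2) m - g (n + 1) m * \<phi> (n + 1) m"
      using S unfolding solves_def by (metis add.assoc one_add_one)
    have e4: "\<phi> n (m + 2) = \<phi> (n + 1) (m + 1) - g n (m + 1) * \<phi> n (m + 1)"
      using S unfolding solves_def by (metis add.assoc one_add_one)
    have f: "(h n m + g (n + 1) m) * g n m = \<beta>\<^sup>2 - \<alpha>\<^sup>2" using F by blast
    have "\<beta>\<^sup>2 = (h n m + g (n + 1) m) * g n m + \<alpha>\<^sup>2" using f by (simp add: algebra_simps)
    then show "\<phi> n (m + 2) + (h n m + g (n + 1) m + g n (m + 1)) * \<phi> n (m + 1)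
                     + \<beta>\<^sup>2 * \<phi> n m = p\<^sup>2 * \<phi> n m"
      unfolding e4 e3 e2 e1 by (simp add: algebra_simps)
  qed
  show ?thesis using P1 P2 P3 P4 by blast
qed

end
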